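(* Let $X,Y$ be real Banach spaces. Assume that $Y$ has octahedral norm and that there exists $f\in S_{X^*}$ such that $n(X^*,f)=1$. Let $H$ be a closed subspace of $L(X,Y)$ such that $X^*\otimes Y\subseteq H$. Then $H$ has octahedral norm.
   Context: The norm of a Banach space $Z$ is octahedral if for every finite-dimensional subspace $E$ of $Z$ and every $\varepsilon>0$ there is $y\in S_Z$ with $\|x+\lambda y\|\ge(1-\varepsilon)(\|x\|+|\lambda|)$ for all $x\in E$ and scalars $\lambda$. For a Banach space $Z$ and $u\in S_Z$, let $D(Z,u)=\{\varphi\in B_{Z^*}:\varphi(u)=1\}$ and let $n(Z,u)$ be the largest $k\ge0$ such that $k\|z\|\le\sup\{|\varphi(z)|:\varphi\in D(Z,u)\}$ for all $z\in Z$ (here applied with $Z=X^*$, $u=f$, so $\varphi$ ranges over $B_{X^{**}}$). $L(X,Y)$ is the space of bounded linear operators with operator norm; $X^*\otimes Y$ is the space of finite-rank operators spanned by $x\mapsto x^*(x)y$. *)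

theory Defs
  imports "HOL-Analysis.Analysis"
begin

definition octahedral_on :: "'z::real_normed_vector set \<Rightarrow> bool" where
  "octahedral_on Z \<longleftrightarrow>
     (\<forall>E. subspace E \<and> E \<subseteq> Z \<and> (\<exists>B. finite B \<and> E = span B) \<longrightarrow>
        (\<forall>eps>0. \<exists>y\<in>Z. norm y = 1 \<and>
           (\<forall>x\<in>E. \<forall>l::real. norm (x + l *\<^sub>R y) \<ge> (1 - eps) * (norm x + \<bar>l\<bar>))))"

definition state_set :: "'z::real_normed_vector \<Rightarrow> ('z \<Rightarrow>\<^sub>L real) set" where
  "state_set u = {\<phi>. norm \<phi> \<le> 1 \<and> blinfun_apply \<phi> u = 1}"

definition numerical_radius :: "'z::real_normed_vector \<Rightarrow> 'z \<Rightarrow> real" where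
  "numerical_radius u z = (SUP \<phi>\<in>state_set u. \<bar>blinfun_apply \<phi> z\<bar>)"

text \<open>n(Z,u): the largest k \<ge> 0 with k norm z \<le> v(z) for all z (the set of such k is a
closed interval [0, n(Z,u)], so it is its supremum).\<close>
definition numerical_index_at :: "'z::real_normed_vector \<Rightarrow> real" where
  "numerical_index_at u = Sup {k. k \<ge> 0 \<and> (\<forall>z. k * norm z \<le> numerical_radius u z)}"

definition rank_one :: "('a::real_normed_vector \<Rightarrow>\<^sub>L real) \<Rightarrow> 'b::real_normed_vector \<Rightarrow> 'a \<Rightarrow>\<^sub>L 'b" where
  "rank_one xs y = blinfun_compose (blinfun_scaleR_left y) xs"

definition tensor_ops :: "('a::real_normed_vector \<Rightarrow>\<^sub>L 'b::real_normed_vector) set" where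
  "tensor_ops = span {rank_one xs y | xs y. True}"

end

theory Submission
  imports Defs
begin


definition pgraphs :: "'b::real_normed_vector \<Rightarrow> ('b \<times> real) set set" where
  "pgraphs v = {G. subspace G \<and> (\<forall>x a b. (x,a)\<in>G \<longrightarrow> (x,b)\<in>G \<longrightarrow> a = b)
      \<and> (\<forall>x a. (x,a)\<in>G \<longrightarrow> a \<le> norm x) \<and> (v, norm v) \<in> G}"

lemma pgraph_base:
  fixes v :: "'b::real_normed_vector"
  shows "{(t *\<^sub>R v, t * norm v) | t. True} \<in> pgraphs v"
proof -
  let ?G = "{(t *\<^sub>R v, t * norm v) | t. True}"
  have sub: "subspace ?G"
    unfolding subspace_def
  proof (intro conjI ballI allI)
    show "0 \<in> ?G" by (rule CollectI, rule exI[of _ 0]) (simp add: zero_prod_def)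
    fix x y assume "x \<in> ?G" "y \<in> ?G"
    then obtain s t where "x = (s *\<^sub>R v, s * norm v)" "y = (t *\<^sub>R v, t * norm v)" by auto
    then show "x + y \<in> ?G"
      by (auto intro!: exI[of _ "s + t"] simp: scaleR_add_left distrib_right)
  next
    fix c x assume "x \<in> ?G"
    then obtain s where "x = (s *\<^sub>R v, s * norm v)" by auto
    then show "c *\<^sub>R x \<in> ?G"
      by (auto intro!: exI[of _ "c * s"])
  qed
  have fnc: "a = b" if "(x,a)\<in>?G" "(x,b)\<in>?G" for x a b
  proof -
    from that(1) obtain s where s: "x = s *\<^sub>R v" "a = s * norm v" by blast
    from that(2) obtain t where t: "x = t *\<^sub>R v" "b = t * norm v" by blast
    note st = s t
    show ?thesis
    proof (cases "v = 0")
      case True then show ?thesis using st by simp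
    next
      case False
      then have "s = t" using st by (metis scaleR_cancel_right)
      then show ?thesis using st by simp
    qed
  qed
  have bnd: "a \<le> norm x" if "(x,a)\<in>?G" for x a
    using that by (auto simp: mult_right_mono)
  have "(v, norm v) \<in> ?G" by (auto intro!: exI[of _ 1])
  then show ?thesis unfolding pgraphs_def using sub fnc bnd by blast
qed

lemma pgraph_chain:
  assumes C: "C \<in> chains (pgraphs v)" and ne: "C \<noteq> {}"
  shows "\<Union>C \<in> pgraphs v"
proof -
  have CA: "C \<subseteq> pgraphs v" and ch: "\<And>X Y. X \<in> C \<Longrightarrow> Y \<in> C \<Longrightarrow> X \<subseteq> Y \<or> Y \<subseteq> X"
    using C unfolding chains_def chain_subset_def by auto
  have P: "\<And>X. X \<in> C \<Longrightarrow> subspace X \<and> (\<forall>x a b. (x,a)\<in>X \<longrightarrow> (x,b)\<in>X \<longrightarrow> a = b)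
      \<and> (\<forall>x a. (x,a)\<in>X \<longrightarrow> a \<le> norm x) \<and> (v, norm v) \<in> X"
    using CA unfolding pgraphs_def by blast
  obtain X0 where X0: "X0 \<in> C" using ne by blast
  have two: "\<exists>Z\<in>C. p \<in> Z \<and> q \<in> Z" if "p \<in> \<Union>C" "q \<in> \<Union>C" for p q
  proof -
    from that obtain X Y where "X \<in> C" "Y \<in> C" "p \<in> X" "q \<in> Y" by blast
    then show ?thesis using ch[of X Y] by blast
  qed
  have sub: "subspace (\<Union>C)"
    unfolding subspace_def
  proof (intro conjI ballI allI)
    show "0 \<in> \<Union>C" using X0 P[OF X0] subspace_0 by blast
    fix x y assume "x \<in> \<Union>C" "y \<in> \<Union>C"
    then obtain Z where "Z \<in> C" "x \<in> Z" "y \<in> Z" using two by blast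
    then show "x + y \<in> \<Union>C" using P subspace_add by blast
  next
    fix c x assume "x \<in> \<Union>C"
    then obtain Z where "Z \<in> C" "x \<in> Z" by blast
    then show "c *\<^sub>R x \<in> \<Union>C" using P subspace_scale by blast
  qed
  have fnc: "a = b" if "(x,a)\<in>\<Union>C" "(x,b)\<in>\<Union>C" for x a b
    using two[OF that] P by blast
  have bnd: "a \<le> norm x" if "(x,a)\<in>\<Union>C" for x a
    using that P by blast
  have "(v, norm v) \<in> \<Union>C" using X0 P by blast
  then show ?thesis unfolding pgraphs_def using sub fnc bnd by blast
qed

lemma pgraph_extend:
  fixes v :: "'b::real_normed_vector"
  assumes M: "M \<in> pgraphs v" and nz: "\<And>a. (z,a) \<notin> M"
  shows "\<exists>M'\<in>pgraphs v. M \<subseteq> M' \<and> M' \<noteq> M"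
proof -
  have subM: "subspace M" and fnM: "\<And>x a b. (x,a)\<in>M \<Longrightarrow> (x,b)\<in>M \<Longrightarrow> a = b"
    and bM: "\<And>x a. (x,a)\<in>M \<Longrightarrow> a \<le> norm x" and vM: "(v, norm v) \<in> M"
    using M unfolding pgraphs_def by blast+
  have addM: "(x + y, a + b) \<in> M" if "(x,a) \<in> M" "(y,b) \<in> M" for x y a b
    using subspace_add[OF subM that] by simp
  have scM: "(r *\<^sub>R x, r * a) \<in> M" if "(x,a) \<in> M" for x a r
    using subspace_scale[OF subM that, of r] by simp
  have zM: "(0, 0) \<in> M" using subspace_0[OF subM] by (simp add: zero_prod_def)
  define L where "L = {a - norm (x - z) | x a. (x,a) \<in> M}"
  have key: "a - norm (x - z) \<le> norm (y + z) - b" if "(x,a) \<in> M" "(y,b) \<in> M" for x y a b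
  proof -
    have "a + b \<le> norm (x + y)" using bM[OF addM[OF that]] .
    also have "\<dots> = norm ((x - z) + (y + z))" by (simp add: algebra_simps)
    also have "\<dots> \<le> norm (x - z) + norm (y + z)" by (rule norm_triangle_ineq)
    finally show ?thesis by simp
  qed
  have Lne: "L \<noteq> {}" using zM unfolding L_def by blast
  have Lbdd: "bdd_above L"
    unfolding L_def bdd_above_def using key[OF _ zM] by force
  define c where "c = Sup L"
  have c_ge: "a - norm (x - z) \<le> c" if "(x,a) \<in> M" for x a
    unfolding c_def using that Lbdd by (auto intro!: cSup_upper simp: L_def)
  have c_le: "c \<le> norm (y + z) - b" if "(y,b) \<in> M" for y b
    unfolding c_def using Lne key[OF _ that] by (auto intro!: cSup_least simp: L_def)
  define M' where "M' = {(x + t *\<^sub>R z, a + t * c) | x a t. (x,a) \<in> M}"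
  have sub': "subspace M'"
    unfolding subspace_def
  proof (intro conjI ballI allI)
    show "0 \<in> M'" unfolding M'_def using zM
      by (auto intro!: exI[of _ 0] simp: zero_prod_def)
    fix p q assume "p \<in> M'" "q \<in> M'"
    then obtain x a t y b s where p: "p = (x + t *\<^sub>R z, a + t * c)" "(x,a) \<in> M"
       and q: "q = (y + s *\<^sub>R z, b + s * c)" "(y,b) \<in> M"
      unfolding M'_def by blast
    have "p + q = ((x + y) + (t + s) *\<^sub>R z, (a + b) + (t + s) * c)"
      using p q by (simp add: algebra_simps)
    then show "p + q \<in> M'" unfolding M'_def using addM[OF p(2) q(2)] by blast
  next
    fix r p assume "p \<in> M'"
    then obtain x a t where p: "p = (x + t *\<^sub>R z, a + t * c)" "(x,a) \<in> M"
      unfolding M'_def by blast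
    have "r *\<^sub>R p = (r *\<^sub>R x + (r * t) *\<^sub>R z, r * a + (r * t) * c)"
      using p by (simp add: algebra_simps)
    then show "r *\<^sub>R p \<in> M'" unfolding M'_def using scM[OF p(2)] by blast
  qed
  have bnd': "a + t * c \<le> norm (x + t *\<^sub>R z)" if "(x,a) \<in> M" for x a t
  proof (cases "t = 0")
    case True then show ?thesis using bM[OF that] by simp
  next
    case False
    show ?thesis
    proof (cases "t > 0")
      case True
      have "c \<le> norm (inverse t *\<^sub>R x + z) - inverse t * a" using c_le[OF scM[OF that]] .
      then have "t * c \<le> t * (norm (inverse t *\<^sub>R x + z) - inverse t * a)"
        using True by (simp add: mult_left_mono)
      also have "\<dots> = norm (t *\<^sub>R (inverse t *\<^sub>R x + z)) - a"
        using True by (simp add: right_diff_distrib)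
      also have "\<dots> = norm (x + t *\<^sub>R z) - a"
        using True by (simp add: scaleR_add_right)
      finally show ?thesis by simp
    next
      case False
      with \<open>t \<noteq> 0\<close> have tn: "t < 0" by simp
      define s where "s = - t"
      have s: "s > 0" using tn s_def by simp
      have "inverse s * a - norm (inverse s *\<^sub>R x - z) \<le> c" using c_ge[OF scM[OF that]] .
      then have "s * (inverse s * a - norm (inverse s *\<^sub>R x - z)) \<le> s * c"
        using s by (simp add: mult_left_mono)
      moreover have "s * (inverse s * a - norm (inverse s *\<^sub>R x - z)) = a - norm (s *\<^sub>R (inverse s *\<^sub>R x - z))"
        using s by (simp add: right_diff_distrib)
      moreover have "s *\<^sub>R (inverse s *\<^sub>R x - z) = x + t *\<^sub>R z"
        using s by (simp add: s_def scaleR_diff_right)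
      ultimately have "a - norm (x + t *\<^sub>R z) \<le> s * c" by simp
      then show ?thesis by (simp add: s_def)
    qed
  qed
  have fn': "a = b" if "(w,a)\<in>M'" "(w,b)\<in>M'" for w a b
  proof -
    from that(1) obtain x a0 t where p: "w = x + t *\<^sub>R z" "a = a0 + t * c" "(x,a0) \<in> M"
      unfolding M'_def by blast
    from that(2) obtain y b0 s where q: "w = y + s *\<^sub>R z" "b = b0 + s * c" "(y,b0) \<in> M"
      unfolding M'_def by blast
    have ts: "t = s"
    proof (rule ccontr)
      assume "t \<noteq> s"
      have e: "x - y = (s - t) *\<^sub>R z" using p q by (simp add: algebra_simps)
      have "(x - y, a0 - b0) \<in> M" using subspace_diff[OF subM p(3) q(3)] by simp
      from scM[OF this, of "inverse (s - t)"]
      have "(z, inverse (s - t) * (a0 - b0)) \<in> M" using e \<open>t \<noteq> s\<close> by simp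
      then show False using nz by blast
    qed
    then have "x = y" using p q by simp
    then have "a0 = b0" using fnM p q by blast
    then show ?thesis using p q ts by simp
  qed
  have inM': "(x, a) \<in> M'" if "(x,a) \<in> M" for x a
  proof -
    have "(x, a) = (x + 0 *\<^sub>R z, a + 0 * c)" by simp
    then show ?thesis unfolding M'_def using that by blast
  qed
  have vM': "(v, norm v) \<in> M'" using inM' vM by blast
  have MM': "M \<subseteq> M'" using inM' by auto
  have "(z, c) = (0 + 1 *\<^sub>R z, 0 + 1 * c)" by simp
  then have "(z, c) \<in> M'" unfolding M'_def using zM by blast
  then have "M' \<noteq> M" using nz by blast
  moreover have bnd'': "a \<le> norm w" if "(w,a) \<in> M'" for w a
    using that bnd' unfolding M'_def by blast
  moreover have "M' \<in> pgraphs v" unfolding pgraphs_def using sub' fn' bnd'' vM' by blast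
  ultimately show ?thesis using MM' by blast
qed

lemma hahn_banach_norming:
  fixes v :: "'b::real_normed_vector"
  shows "\<exists>g::'b \<Rightarrow>\<^sub>L real. norm g \<le> 1 \<and> blinfun_apply g v = norm v"
proof -
  have "\<forall>C\<in>chains (pgraphs v). \<exists>U\<in>pgraphs v. \<forall>X\<in>C. X \<subseteq> U"
  proof
    fix C assume C: "C \<in> chains (pgraphs v)"
    show "\<exists>U\<in>pgraphs v. \<forall>X\<in>C. X \<subseteq> U"
    proof (cases "C = {}")
      case True then show ?thesis using pgraph_base by blast
    next
      case False then show ?thesis using pgraph_chain[OF C] by blast
    qed
  qed
  from Zorn_Lemma2[OF this] obtain M where M: "M \<in> pgraphs v"
    and max: "\<And>X. X \<in> pgraphs v \<Longrightarrow> M \<subseteq> X \<Longrightarrow> X = M" by blast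
  have subM: "subspace M" and fnM: "\<And>x a b. (x,a)\<in>M \<Longrightarrow> (x,b)\<in>M \<Longrightarrow> a = b"
    and bM: "\<And>x a. (x,a)\<in>M \<Longrightarrow> a \<le> norm x" and vM: "(v, norm v) \<in> M"
    using M unfolding pgraphs_def by blast+
  have tot: "\<exists>a. (z,a) \<in> M" for z
    using pgraph_extend[OF M, of z] max by blast
  define h where "h z = (THE a. (z,a) \<in> M)" for z
  have hM: "(z, h z) \<in> M" for z
    unfolding h_def using tot[of z] fnM by (metis theI)
  have hval: "h z = a" if "(z,a) \<in> M" for z a
    using fnM[OF hM that] .
  have hadd: "h (x + y) = h x + h y" for x y
    using subspace_add[OF subM hM[of x] hM[of y]] hval by simp
  have hsc: "h (r *\<^sub>R x) = r *\<^sub>R h x" for r x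
    using subspace_scale[OF subM hM[of x], of r] hval by simp
  have hb: "norm (h x) \<le> norm x * 1" for x
  proof -
    have "h x \<le> norm x" using bM[OF hM] .
    moreover have "- h x \<le> norm x"
      using bM[OF hM[of "-x"]] hsc[of "-1" x] by simp
    ultimately show ?thesis by simp
  qed
  have bl: "bounded_linear h" by (rule bounded_linear_intro[OF hadd hsc hb])
  define g where "g = Blinfun h"
  have ga: "blinfun_apply g = h" unfolding g_def using bl by (simp add: bounded_linear_Blinfun_apply)
  have "norm g \<le> 1" using hb by (intro norm_blinfun_bound) (auto simp: ga)
  moreover have "blinfun_apply g v = norm v" using hval[OF vM] ga by simp
  ultimately show ?thesis by blast
qed



lemma closed_span_lower:
  fixes C :: "'v::real_normed_vector set"
  assumes fin: "finite C" and m: "m > 0"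
    and low: "\<And>c. m * (\<Sum>b\<in>C. \<bar>c b\<bar>) \<le> norm (\<Sum>b\<in>C. c b *\<^sub>R b)"
  shows "closed (span C)"
  unfolding closed_sequential_limits
proof (intro allI impI, elim conjE)
  fix s l assume sC: "\<forall>n. s n \<in> span C" and lim: "s \<longlonglongrightarrow> l"
  have "\<forall>n. \<exists>u. s n = (\<Sum>b\<in>C. u b *\<^sub>R b)"
    using sC span_finite[OF fin] by (metis (no_types, lifting) imageE)
  then obtain u where u: "\<And>n. s n = (\<Sum>b\<in>C. u n b *\<^sub>R b)" by metis
  have coef: "\<bar>u n b - u k b\<bar> \<le> norm (s n - s k) / m" if b: "b \<in> C" for n k b
  proof -
    have "\<bar>u n b - u k b\<bar> \<le> (\<Sum>b\<in>C. \<bar>u n b - u k b\<bar>)"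
      using member_le_sum[of b C "\<lambda>b. \<bar>u n b - u k b\<bar>"] fin b by auto
    also have "m * \<dots> \<le> norm (\<Sum>b\<in>C. (u n b - u k b) *\<^sub>R b)" by (rule low)
    also have "(\<Sum>b\<in>C. (u n b - u k b) *\<^sub>R b) = s n - s k"
      by (simp add: u scaleR_diff_left sum_subtractf)
    finally have "m * \<bar>u n b - u k b\<bar> \<le> norm (s n - s k)"
      using m by (smt (verit, best) \<open>\<bar>u n b - u k b\<bar> \<le> (\<Sum>b\<in>C. \<bar>u n b - u k b\<bar>)\<close> mult_left_mono)
    then show ?thesis using m by (simp add: field_simps)
  qed
  have cs: "Cauchy s" using lim by (rule LIMSEQ_imp_Cauchy)
  have cu: "Cauchy (\<lambda>n. u n b)" if b: "b \<in> C" for b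
  proof (rule CauchyI)
    fix e :: real assume e: "e > 0"
    obtain M where M: "\<forall>p\<ge>M. \<forall>q\<ge>M. norm (s p - s q) < e * m"
      using CauchyD[OF cs, of "e * m"] e m by auto
    show "\<exists>M. \<forall>p\<ge>M. \<forall>q\<ge>M. norm (u p b - u q b) < e"
    proof (intro exI allI impI)
      fix p q assume "p \<ge> M" "q \<ge> M"
      then have "norm (s p - s q) / m < e" using M m by (simp add: divide_less_eq)
      then show "norm (u p b - u q b) < e" using coef[OF b, of p q] by simp
    qed
  qed
  define w where "w b = lim (\<lambda>n. u n b)" for b
  have wl: "(\<lambda>n. u n b) \<longlonglongrightarrow> w b" if "b \<in> C" for b
    unfolding w_def using cu[OF that] Cauchy_convergent_iff convergent_LIMSEQ_iff by blast
  have "s \<longlonglongrightarrow> (\<Sum>b\<in>C. w b *\<^sub>R b)"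
    unfolding u by (intro tendsto_sum tendsto_scaleR wl tendsto_const)
  then have "l = (\<Sum>b\<in>C. w b *\<^sub>R b)" using lim LIMSEQ_unique by blast
  then show "l \<in> span C" using span_finite[OF fin] by auto
qed

lemma fd_lower:
  fixes C :: "'v::real_normed_vector set"
  assumes "finite C" "independent C"
  shows "\<exists>m>0. \<forall>c. m * (\<Sum>b\<in>C. \<bar>c b\<bar>) \<le> norm (\<Sum>b\<in>C. c b *\<^sub>R b)"
  using assms
proof (induction C rule: finite_induct)
  case empty then show ?case by (intro exI[of _ 1]) simp
next
  case (insert a C)
  have indC: "independent C" and aC: "a \<notin> span C"
    using insert.prems insert.hyps(2) by (auto simp: independent_insert)
  obtain m where m: "m > 0" and low: "\<And>c. m * (\<Sum>b\<in>C. \<bar>c b\<bar>) \<le> norm (\<Sum>b\<in>C. c b *\<^sub>R b)"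
    using insert.IH[OF indC] by blast
  have cl: "closed (span C)" using closed_span_lower[OF insert.hyps(1) m low] .
  define d where "d = infdist a (span C)"
  have d: "d > 0" unfolding d_def
    using infdist_pos_not_in_closed[OF cl _ aC] span_zero by blast
  define A where "A = norm a"
  define K where "K = 1 / d + (1 + A / d) / m"
  have K: "K > 0" unfolding K_def using d m by (simp add: A_def add_pos_nonneg)
  show ?case
  proof (intro exI[of _ "1 / K"] conjI allI)
    show "1 / K > 0" using K by simp
    fix c :: "'v \<Rightarrow> real"
    define v where "v = (\<Sum>b\<in>C. c b *\<^sub>R b)"
    define t where "t = c a"
    define N where "N = norm (t *\<^sub>R a + v)"
    have sumeq: "(\<Sum>b\<in>insert a C. c b *\<^sub>R b) = t *\<^sub>R a + v"
      using insert.hyps by (simp add: v_def t_def)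
    have abseq: "(\<Sum>b\<in>insert a C. \<bar>c b\<bar>) = \<bar>t\<bar> + (\<Sum>b\<in>C. \<bar>c b\<bar>)"
      using insert.hyps by (simp add: t_def)
    have vspan: "v \<in> span C" unfolding v_def by (intro span_sum span_scale span_base)
    have N1: "\<bar>t\<bar> * d \<le> N"
    proof (cases "t = 0")
      case True then show ?thesis by (simp add: N_def)
    next
      case False
      have "- (inverse t *\<^sub>R v) \<in> span C" using vspan by (intro span_neg span_scale)
      then have "d \<le> dist a (- (inverse t *\<^sub>R v))" unfolding d_def by (rule infdist_le)
      also have "\<dots> = norm (a + inverse t *\<^sub>R v)" by (simp add: dist_norm)
      finally have "\<bar>t\<bar> * d \<le> \<bar>t\<bar> * norm (a + inverse t *\<^sub>R v)"
        by (simp add: mult_left_mono)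
      also have "\<dots> = norm (t *\<^sub>R (a + inverse t *\<^sub>R v))" by simp
      also have "\<dots> = N" using False by (simp add: N_def scaleR_add_right)
      finally show ?thesis .
    qed
    have N2: "norm v \<le> N + \<bar>t\<bar> * A"
    proof -
      have "norm v = norm ((t *\<^sub>R a + v) - t *\<^sub>R a)" by simp
      also have "\<dots> \<le> N + norm (t *\<^sub>R a)" unfolding N_def by (rule norm_triangle_ineq4)
      finally show ?thesis by (simp add: A_def)
    qed
    have t_le: "\<bar>t\<bar> \<le> N / d" using N1 d by (simp add: field_simps)
    have "m * (\<Sum>b\<in>C. \<bar>c b\<bar>) \<le> N + \<bar>t\<bar> * A" using low[of c] N2 by (simp add: v_def)
    also have "\<dots> \<le> N + N / d * A" using t_le by (intro add_left_mono mult_right_mono) (auto simp: A_def)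
    finally have s_le: "(\<Sum>b\<in>C. \<bar>c b\<bar>) \<le> (N + N / d * A) / m" using m by (simp add: field_simps)
    have "(\<Sum>b\<in>insert a C. \<bar>c b\<bar>) \<le> N / d + (N + N / d * A) / m"
      using abseq t_le s_le by simp
    also have "\<dots> = K * N" unfolding K_def by (simp add: field_simps)
    finally have "(\<Sum>b\<in>insert a C. \<bar>c b\<bar>) \<le> K * N" .
    then show "1 / K * (\<Sum>b\<in>insert a C. \<bar>c b\<bar>) \<le> norm (\<Sum>b\<in>insert a C. c b *\<^sub>R b)"
      using K by (simp add: sumeq N_def field_simps)
  qed
qed

lemma span_ball_tb:
  fixes B :: "'v::real_normed_vector set"
  assumes finB: "finite B" and e: "e > 0"
  shows "\<exists>k. finite k \<and> {T \<in> span B. norm T \<le> 1} \<subseteq> (\<Union>x\<in>k. ball x e)"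
proof -
  obtain C where CB: "C \<subseteq> B" and indC: "independent C" and BC: "B \<subseteq> span C"
    by (rule maximal_independent_subset[of B])
  have finC: "finite C" using finite_subset[OF CB finB] .
  have spanCB: "span C = span B"
    using CB BC by (metis span_mono span_span subset_antisym)
  obtain m where m: "m > 0" and low: "\<And>c. m * (\<Sum>b\<in>C. \<bar>c b\<bar>) \<le> norm (\<Sum>b\<in>C. c b *\<^sub>R b)"
    using fd_lower[OF finC indC] by blast
  define S where "S = (\<Sum>b\<in>C. norm b)"
  have S0: "S \<ge> 0" unfolding S_def by (simp add: sum_nonneg)
  define h where "h = e / (S + 1)"
  have h: "h > 0" unfolding h_def using e S0 by simp
  have hS: "h * S < e"
  proof -
    have "h * S < h * (S + 1)" using h by simp
    also have "\<dots> = e" unfolding h_def using S0 by simp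
    finally show ?thesis .
  qed
  define N :: int where "N = ceiling (1 / (m * h)) + 1"
  define G0 where "G0 = (\<lambda>j. of_int j * h) ` {-N..N}"
  define k where "k = (\<lambda>c. \<Sum>b\<in>C. c b *\<^sub>R b) ` (PiE C (\<lambda>_. G0))"
  have fink: "finite k" unfolding k_def G0_def using finC by (intro finite_imageI finite_PiE) auto
  have cover: "T \<in> (\<Union>x\<in>k. ball x e)" if T: "T \<in> span B" "norm T \<le> 1" for T
  proof -
    obtain c where c: "T = (\<Sum>b\<in>C. c b *\<^sub>R b)"
      using T(1) spanCB span_finite[OF finC] by (metis (no_types, lifting) imageE)
    have cb: "\<bar>c b\<bar> \<le> 1 / m" if b: "b \<in> C" for b
    proof -
      have "\<bar>c b\<bar> \<le> (\<Sum>b\<in>C. \<bar>c b\<bar>)"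
        using member_le_sum[of b C "\<lambda>b. \<bar>c b\<bar>"] finC b by auto
      moreover have "m * (\<Sum>b\<in>C. \<bar>c b\<bar>) \<le> 1" using low[of c] T(2) c by simp
      ultimately have "m * \<bar>c b\<bar> \<le> 1" using m
        by (smt (verit) mult_left_mono)
      then show ?thesis using m by (simp add: field_simps)
    qed
    define c' where "c' = restrict (\<lambda>b. of_int (floor (c b / h)) * h) C"
    have c'G: "c' \<in> PiE C (\<lambda>_. G0)"
    proof -
      have "of_int (floor (c b / h)) * h \<in> G0" if b: "b \<in> C" for b
      proof -
        have q: "\<bar>c b / h\<bar> \<le> 1 / (m * h)" using cb[OF b] h m
          by (simp add: abs_divide divide_right_mono field_simps)
        have "floor (c b / h) \<le> N"
        proof -
          have "floor (c b / h) \<le> ceiling (c b / h)" by (rule floor_le_ceiling)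
          also have "\<dots> \<le> ceiling (1 / (m * h))" using abs_le_D1[OF q] by (intro ceiling_mono)
          finally show ?thesis unfolding N_def by simp
        qed
        moreover have "- N \<le> floor (c b / h)"
        proof -
          have "- (1 / (m * h)) \<le> c b / h" using abs_le_D2[OF q] by linarith
          then have "floor (- (1 / (m * h))) \<le> floor (c b / h)" by (rule floor_mono)
          moreover have "- ceiling (1 / (m * h)) = floor (- (1 / (m * h)))" by (simp add: ceiling_def)
          ultimately show ?thesis unfolding N_def by linarith
        qed
        ultimately show ?thesis unfolding G0_def by auto
      qed
      then show ?thesis unfolding c'_def by auto
    qed
    have diff: "\<bar>c b - c' b\<bar> \<le> h" if b: "b \<in> C" for b
    proof -
      have f1: "of_int (floor (c b / h)) \<le> c b / h" by (rule of_int_floor_le)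
      have f2: "c b / h < of_int (floor (c b / h)) + 1" by (rule real_of_int_floor_add_one_gt)
      have "of_int (floor (c b / h)) * h \<le> c b" using mult_right_mono[OF f1, of h] h by simp
      moreover have "c b < (of_int (floor (c b / h)) + 1) * h" using mult_strict_right_mono[OF f2 h] h by simp
      ultimately have "of_int (floor (c b / h)) * h \<le> c b" "c b < (of_int (floor (c b / h)) + 1) * h" by auto
      then show ?thesis using b unfolding c'_def by (simp add: algebra_simps)
    qed
    define x where "x = (\<Sum>b\<in>C. c' b *\<^sub>R b)"
    have xk: "x \<in> k" unfolding k_def x_def using c'G by blast
    have "dist x T = norm (\<Sum>b\<in>C. (c b - c' b) *\<^sub>R b)"
      by (simp add: dist_norm c x_def scaleR_diff_left sum_subtractf norm_minus_commute)
    also have "\<dots> \<le> (\<Sum>b\<in>C. norm ((c b - c' b) *\<^sub>R b))" by (rule norm_sum)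
    also have "\<dots> \<le> (\<Sum>b\<in>C. h * norm b)"
      using diff by (intro sum_mono) (simp add: mult_right_mono)
    also have "\<dots> = h * S" unfolding S_def by (simp add: sum_distrib_left)
    finally have "dist x T < e" using hS by simp
    then show ?thesis using xk by auto
  qed
  show ?thesis using fink cover by blast
qed



lemma norm_le_unit:
  fixes g :: "'a::real_normed_vector \<Rightarrow>\<^sub>L 'c::real_normed_vector"
  assumes M: "0 \<le> M" and H: "\<And>x. norm x \<le> 1 \<Longrightarrow> norm (blinfun_apply g x) \<le> M"
  shows "norm g \<le> M"
proof (rule norm_blinfun_bound[OF M])
  fix x :: 'a
  show "norm (blinfun_apply g x) \<le> M * norm x"
  proof (cases "x = 0")
    case True then show ?thesis by simp
  next
    case False
    then have nx: "norm x > 0" by simp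
    have "norm (blinfun_apply g (inverse (norm x) *\<^sub>R x)) \<le> M" using H nx by simp
    moreover have "blinfun_apply g x = norm x *\<^sub>R blinfun_apply g (inverse (norm x) *\<^sub>R x)"
      using nx by (simp add: blinfun.scaleR_right)
    ultimately show ?thesis using nx by (simp add: mult.commute mult_left_mono)
  qed
qed

lemma norm_le_unit_real:
  fixes g :: "'a::real_normed_vector \<Rightarrow>\<^sub>L real"
  assumes M: "0 \<le> M" and H: "\<And>x. norm x \<le> 1 \<Longrightarrow> blinfun_apply g x \<le> M"
  shows "norm g \<le> M"
proof (rule norm_le_unit[OF M])
  fix x :: 'a assume x: "norm x \<le> 1"
  have "blinfun_apply g x \<le> M" using H[OF x] .
  moreover have "- blinfun_apply g x \<le> M" using H[of "-x"] x by (simp add: blinfun.minus_right)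
  ultimately show "norm (blinfun_apply g x) \<le> M" by simp
qed

lemma approx_norm:
  fixes g :: "'a::real_normed_vector \<Rightarrow>\<^sub>L 'c::real_normed_vector"
  assumes "c < norm g"
  shows "\<exists>x. norm x \<le> 1 \<and> c < norm (blinfun_apply g x)"
proof (rule ccontr)
  assume "\<not> ?thesis"
  then have H: "\<And>x. norm x \<le> 1 \<Longrightarrow> norm (blinfun_apply g x) \<le> c" by force
  have "c \<ge> 0" using H[of 0] by simp
  then have "norm g \<le> c" using norm_le_unit H by blast
  then show False using assms by simp
qed

lemma index_one:
  fixes f :: "'a::real_normed_vector \<Rightarrow>\<^sub>L real"
  assumes nf: "norm f = 1" and idx: "numerical_index_at f = 1"
  shows "state_set f \<noteq> {} \<and> (\<forall>z. norm z \<le> numerical_radius f z)"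
proof -
  define D where "D = state_set f"
  define K where "K = {k. k \<ge> 0 \<and> (\<forall>z. k * norm z \<le> numerical_radius f z)}"
  have SupK: "Sup K = 1" using idx unfolding numerical_index_at_def K_def .
  have Dne: "D \<noteq> {}"
  proof
    assume De: "D = {}"
    define c0 where "c0 = Sup ({} :: real set)"
    have vz: "numerical_radius f z = c0" for z
      unfolding numerical_radius_def c0_def using De D_def by simp
    show False
    proof (cases "0 \<le> c0")
      case True
      have "K = {0}"
      proof (rule set_eqI, rule iffI)
        fix k assume k: "k \<in> K"
        have "k \<ge> 0" using k K_def by simp
        moreover have "\<not> k > 0"
        proof
          assume kp: "k > 0"
          have "\<forall>z::'a \<Rightarrow>\<^sub>L real. k * norm z \<le> c0" using k vz K_def by simp
          then have "k * norm (((c0 + 1) / k) *\<^sub>R f) \<le> c0" by blast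
          moreover have "norm (((c0 + 1) / k) *\<^sub>R f) = (c0 + 1) / k" using kp True nf by simp
          ultimately show False using kp by simp
        qed
        ultimately show "k \<in> {0}" by simp
      next
        fix k :: real assume "k \<in> {0}" then show "k \<in> K" using True vz K_def by simp
      qed
      then show False using SupK by simp
    next
      case False
      have "k \<notin> K" for k
      proof
        assume "k \<in> K"
        then have "\<forall>z::'a \<Rightarrow>\<^sub>L real. k * norm z \<le> c0" using vz K_def by simp
        then have "k * norm (0::'a \<Rightarrow>\<^sub>L real) \<le> c0" by (rule spec)
        then show False using False by simp
      qed
      then have "K = {}" by blast
      then show False using SupK False c0_def by simp
    qed
  qed
  have phib: "\<bar>blinfun_apply \<phi> z\<bar> \<le> norm z" if "\<phi> \<in> D" for \<phi> z
  proof -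
    have "\<bar>blinfun_apply \<phi> z\<bar> \<le> norm \<phi> * norm z" using norm_blinfun[of \<phi> z] by simp
    also have "\<dots> \<le> 1 * norm z" using that D_def state_set_def by (intro mult_right_mono) auto
    finally show ?thesis by simp
  qed
  have bdd: "bdd_above ((\<lambda>\<phi>. \<bar>blinfun_apply \<phi> z\<bar>) ` D)" for z
    using phib by (intro bdd_aboveI[of _ "norm z"]) auto
  have vle: "numerical_radius f z \<le> norm z" for z
    unfolding numerical_radius_def D_def[symmetric] using Dne phib by (intro cSUP_least) auto
  have vge: "\<bar>blinfun_apply \<phi> z\<bar> \<le> numerical_radius f z" if "\<phi> \<in> D" for \<phi> z
    unfolding numerical_radius_def D_def[symmetric] using bdd that by (intro cSUP_upper)
  obtain \<phi>0 where \<phi>0: "\<phi>0 \<in> D" using Dne by blast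
  have v0: "numerical_radius f z \<ge> 0" for z using vge[OF \<phi>0, of z] by simp
  have K0: "0 \<in> K" using v0 K_def by simp
  have Kb: "bdd_above K"
  proof (rule bdd_aboveI[of _ 1])
    fix k assume "k \<in> K"
    then have "k * norm f \<le> numerical_radius f f" using K_def by simp
    then show "k \<le> 1" using vle[of f] nf by simp
  qed
  have "norm z \<le> numerical_radius f z" for z
  proof (rule field_le_mult_one_interval)
    fix w :: real assume w: "0 < w" "w < 1"
    then obtain k where k: "k \<in> K" "w < k" using less_cSup_iff[OF _ Kb, of w] K0 SupK by auto
    then have "w * norm z \<le> k * norm z" by (simp add: mult_right_mono)
    also have "\<dots> \<le> numerical_radius f z" using k K_def by simp
    finally show "w * norm z \<le> numerical_radius f z" .
  qed
  then show ?thesis using Dne D_def by simp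
qed

lemma one_side:
  fixes f g :: "'a::real_normed_vector \<Rightarrow>\<^sub>L real"
  assumes nf: "norm f = 1" and phi: "\<phi> \<in> state_set f" and d: "\<delta> > 0" and c: "c \<ge> 0"
    and H: "\<And>x. norm x \<le> 1 \<Longrightarrow> blinfun_apply f x > 1 - \<delta> \<Longrightarrow> blinfun_apply g x \<le> c"
  shows "blinfun_apply \<phi> g \<le> c"
proof -
  have nphi: "norm \<phi> \<le> 1" and phif: "blinfun_apply \<phi> f = 1" using phi state_set_def by auto
  define t where "t = (norm g + 1) / \<delta>"
  have t: "t > 0" unfolding t_def using d by (simp add: add_nonneg_pos)
  have td: "t * \<delta> = norm g + 1" unfolding t_def using d by simp
  define w where "w = g + t *\<^sub>R f"
  have nw: "norm w \<le> c + t"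
  proof (rule norm_le_unit_real)
    show "0 \<le> c + t" using c t by simp
    fix x :: 'a assume x: "norm x \<le> 1"
    have fx1: "blinfun_apply f x \<le> 1"
      using norm_blinfun[of f x] nf x by (smt (verit) mult_left_le_one_le norm_ge_zero real_norm_def)
    have gx: "blinfun_apply g x \<le> norm g"
      using norm_blinfun[of g x] x by (smt (verit) mult_left_le_one_le norm_ge_zero real_norm_def mult.commute)
    have wx: "blinfun_apply w x = blinfun_apply g x + t * blinfun_apply f x" by (simp add: w_def blinfun.add_left blinfun.scaleR_left)
    show "blinfun_apply w x \<le> c + t"
    proof (cases "blinfun_apply f x > 1 - \<delta>")
      case True
      have "t * blinfun_apply f x \<le> t" using fx1 t by (simp add: mult_left_le)
      then show ?thesis using H[OF x True] wx by simp
    next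
      case False
      then have "t * blinfun_apply f x \<le> t * (1 - \<delta>)" using t by (intro mult_left_mono) auto
      also have "\<dots> = t - (norm g + 1)" using td by (simp add: right_diff_distrib)
      finally show ?thesis using gx wx c by simp
    qed
  qed
  have "blinfun_apply \<phi> w \<le> norm \<phi> * norm w"
    using norm_blinfun[of \<phi> w] by simp
  also have "\<dots> \<le> 1 * (c + t)" using nphi nw by (intro mult_mono) auto
  finally have "blinfun_apply \<phi> w \<le> c + t" by simp
  moreover have "blinfun_apply \<phi> w = blinfun_apply \<phi> g + t"
    by (simp add: w_def blinfun.add_right blinfun.scaleR_right phif)
  ultimately show ?thesis by simp
qed

lemma slice_lemma:
  fixes f xs :: "'a::real_normed_vector \<Rightarrow>\<^sub>L real"
  assumes nf: "norm f = 1" and idx: "numerical_index_at f = 1" and d: "\<delta> > 0"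
    and c: "c \<ge> 0" and cx: "c < norm xs"
  shows "\<exists>x. norm x \<le> 1 \<and> blinfun_apply f x > 1 - \<delta> \<and> \<bar>blinfun_apply xs x\<bar> > c"
proof (rule ccontr)
  assume "\<not> ?thesis"
  then have H: "\<And>x. norm x \<le> 1 \<Longrightarrow> blinfun_apply f x > 1 - \<delta> \<Longrightarrow> \<bar>blinfun_apply xs x\<bar> \<le> c"
    by force
  obtain Dne: "state_set f \<noteq> {}" and vn: "\<And>z. norm z \<le> numerical_radius f z"
    using index_one[OF nf idx] by blast
  have "\<bar>blinfun_apply \<phi> xs\<bar> \<le> c" if phi: "\<phi> \<in> state_set f" for \<phi>
  proof -
    have "blinfun_apply \<phi> xs \<le> c"
      using one_side[OF nf phi d c, of xs] H by force
    moreover have "blinfun_apply \<phi> (- xs) \<le> c"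
    proof (rule one_side[OF nf phi d c])
      fix x :: 'a assume "norm x \<le> 1" "blinfun_apply f x > 1 - \<delta>"
      then have "\<bar>blinfun_apply xs x\<bar> \<le> c" by (rule H)
      then show "blinfun_apply (- xs) x \<le> c" by (simp add: blinfun.minus_left)
    qed
    ultimately show ?thesis by (simp add: blinfun.minus_right)
  qed
  then have "numerical_radius f xs \<le> c"
    unfolding numerical_radius_def using Dne by (intro cSUP_least) auto
  then show False using vn[of xs] cx by simp
qed

lemma good_point:
  fixes f :: "'a::real_normed_vector \<Rightarrow>\<^sub>L real" and T :: "'a \<Rightarrow>\<^sub>L 'b::real_normed_vector"
  assumes nf: "norm f = 1" and idx: "numerical_index_at f = 1" and d: "\<delta> > 0"
  shows "\<exists>x. norm x \<le> 1 \<and> blinfun_apply f x > 1 - \<delta> \<and> norm (blinfun_apply T x) > norm T - \<delta>"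
proof (cases "norm T - \<delta> < 0")
  case True
  obtain x where "norm x \<le> 1" "blinfun_apply f x > 1 - \<delta>"
    using slice_lemma[OF nf idx d, of 0 f] nf by auto
  moreover have "norm T - \<delta> < norm (blinfun_apply T x)"
    using True norm_ge_zero[of "blinfun_apply T x"] by linarith
  ultimately show ?thesis by blast
next
  case False
  obtain x0 where x0: "norm x0 \<le> 1" "norm T - \<delta> / 2 < norm (blinfun_apply T x0)"
    using approx_norm[of "norm T - \<delta> / 2" T] d by auto
  obtain g :: "'b \<Rightarrow>\<^sub>L real" where g: "norm g \<le> 1" "blinfun_apply g (blinfun_apply T x0) = norm (blinfun_apply T x0)"
    using hahn_banach_norming by blast
  define xs where "xs = blinfun_compose g T"
  have "norm (blinfun_apply T x0) = blinfun_apply xs x0" using g by (simp add: xs_def)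
  also have "\<dots> \<le> norm (blinfun_apply xs x0)" by simp
  also have "\<dots> \<le> norm xs * norm x0" by (rule norm_blinfun)
  also have "\<dots> \<le> norm xs" using x0(1) by (simp add: mult_left_le)
  finally have "norm T - \<delta> < norm xs" using x0 d by simp
  then obtain x where x: "norm x \<le> 1" "blinfun_apply f x > 1 - \<delta>" "\<bar>blinfun_apply xs x\<bar> > norm T - \<delta>"
    using slice_lemma[OF nf idx d, of "norm T - \<delta>" xs] False by auto
  have "\<bar>blinfun_apply xs x\<bar> \<le> norm g * norm (blinfun_apply T x)"
    using norm_blinfun[of g "blinfun_apply T x"] by (simp add: xs_def)
  also have "\<dots> \<le> norm (blinfun_apply T x)" using g(1) by (simp add: mult_left_le_one_le)
  finally show ?thesis using x by (intro exI[of _ x]) auto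
qed



theorem mainTheorem4:
  fixes f :: "'a::banach \<Rightarrow>\<^sub>L real"
    and H :: "('a \<Rightarrow>\<^sub>L 'b::banach) set"
  assumes "octahedral_on (UNIV :: 'b set)"
    and "norm f = 1"
    and "numerical_index_at f = 1"
    and "subspace H" and "closed H"
    and "(tensor_ops :: ('a \<Rightarrow>\<^sub>L 'b) set) \<subseteq> H"
  shows "octahedral_on H"
  unfolding octahedral_on_def
proof (intro allI impI ballI)
  note oct = assms(1) and nf = assms(2) and idx = assms(3) and tH = assms(6)
  fix E :: "('a \<Rightarrow>\<^sub>L 'b) set" and eps :: real
  assume EH: "subspace E \<and> E \<subseteq> H \<and> (\<exists>B. finite B \<and> E = span B)" and eps: "eps > 0"
  obtain B where finB: "finite B" and EB: "E = span B" using EH by blast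
  have subE: "subspace E" using EH by blast
  define \<delta> where "\<delta> = min (eps / 4) (1 / 4)"
  have d: "\<delta> > 0" "\<delta> \<le> 1/4" "4 * \<delta> \<le> eps" unfolding \<delta>_def using eps by auto
  obtain k where fink: "finite k" and cov: "{T \<in> span B. norm T \<le> 1} \<subseteq> (\<Union>x\<in>k. ball x \<delta>)"
    using span_ball_tb[OF finB d(1)] by blast
  have "\<forall>T::'a \<Rightarrow>\<^sub>L 'b. \<exists>x. norm x \<le> 1 \<and> blinfun_apply f x > 1 - \<delta> \<and> norm (blinfun_apply T x) > norm T - \<delta>"
    using good_point[OF nf idx d(1)] by blast
  then obtain xs where xs: "\<And>T::'a \<Rightarrow>\<^sub>L 'b. norm (xs T) \<le> 1 \<and> blinfun_apply f (xs T) > 1 - \<delta> \<and> norm (blinfun_apply T (xs T)) > norm T - \<delta>"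
    by metis
  define F where "F = span ((\<lambda>T. blinfun_apply T (xs T)) ` k)"
  have Fp: "subspace F \<and> F \<subseteq> UNIV \<and> (\<exists>B. finite B \<and> F = span B)"
    unfolding F_def using fink by (intro conjI subspace_span exI[of _ "(\<lambda>T. blinfun_apply T (xs T)) ` k"]) auto
  have "\<exists>y\<in>UNIV. norm y = 1 \<and> (\<forall>u\<in>F. \<forall>l::real. norm (u + l *\<^sub>R y) \<ge> (1 - \<delta>) * (norm u + \<bar>l\<bar>))"
    using oct d(1) Fp unfolding octahedral_on_def by simp
  then obtain y where ny: "norm y = 1"
    and yoct: "\<And>u l. u \<in> F \<Longrightarrow> norm (u + l *\<^sub>R y) \<ge> (1 - \<delta>) * (norm u + \<bar>l\<bar>)"
    by blast
  define S where "S = rank_one f y"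
  have Sx: "blinfun_apply S x = blinfun_apply f x *\<^sub>R y" for x
    by (simp add: S_def rank_one_def)
  have SH: "S \<in> H" using tH unfolding tensor_ops_def S_def by (auto intro: span_base)
  have nS: "norm S = 1"
  proof (rule antisym)
    show "norm S \<le> 1"
    proof (rule norm_blinfun_bound)
      fix x show "norm (blinfun_apply S x) \<le> 1 * norm x"
        using norm_blinfun[of f x] nf ny by (simp add: Sx)
    qed simp
    show "1 \<le> norm S"
    proof -
      have "norm f \<le> norm S"
      proof (rule norm_blinfun_bound)
        fix x show "norm (blinfun_apply f x) \<le> norm S * norm x"
          using norm_blinfun[of S x] ny by (simp add: Sx)
      qed simp
      then show ?thesis using nf by simp
    qed
  qed
  have K: "norm (T + \<mu> *\<^sub>R S) \<ge> (1 - 4 * \<delta>) * (1 + \<bar>\<mu>\<bar>)" if T: "T \<in> E" "norm T = 1" for T \<mu>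
  proof -
    have "T \<in> {T \<in> span B. norm T \<le> 1}" using T EB by simp
    then have "T \<in> (\<Union>x\<in>k. ball x \<delta>)" using cov by blast
    then obtain T0 where T0: "T0 \<in> k" "dist T0 T < \<delta>" by auto
    define x where "x = xs T0"
    have x: "norm x \<le> 1" "blinfun_apply f x > 1 - \<delta>" "norm (blinfun_apply T0 x) > norm T0 - \<delta>"
      using xs unfolding x_def by auto
    define u where "u = blinfun_apply T0 x"
    have uF: "u \<in> F" unfolding F_def u_def x_def using T0(1) by (auto intro: span_base)
    define l where "l = \<mu> * blinfun_apply f x"
    have nT0: "norm T0 \<ge> 1 - \<delta>"
      using T0(2) T(2) norm_triangle_ineq2[of T T0] by (simp add: dist_norm norm_minus_commute)
    have a: "norm u \<ge> 1 - 2 * \<delta>" using x(3) nT0 by (simp add: u_def)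
    have b: "\<bar>blinfun_apply f x\<bar> \<ge> 1 - \<delta>" using x(2) by simp
    have lb: "\<bar>l\<bar> \<ge> \<bar>\<mu>\<bar> * (1 - \<delta>)" unfolding l_def abs_mult using b by (simp add: mult_left_mono)
    have diffx: "norm (blinfun_apply (T - T0) x) < \<delta>"
    proof -
      have "norm (blinfun_apply (T - T0) x) \<le> norm (T - T0) * norm x" by (rule norm_blinfun)
      also have "\<dots> \<le> norm (T - T0)" using x(1) by (simp add: mult_left_le)
      also have "\<dots> < \<delta>" using T0(2) by (simp add: dist_norm norm_minus_commute)
      finally show ?thesis .
    qed
    have "norm (blinfun_apply (T + \<mu> *\<^sub>R S) x) \<le> norm (T + \<mu> *\<^sub>R S) * norm x" by (rule norm_blinfun)
    also have "\<dots> \<le> norm (T + \<mu> *\<^sub>R S)" using x(1) by (simp add: mult_left_le)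
    finally have n1: "norm (blinfun_apply (T + \<mu> *\<^sub>R S) x) \<le> norm (T + \<mu> *\<^sub>R S)" .
    have eq: "blinfun_apply (T + \<mu> *\<^sub>R S) x = (u + l *\<^sub>R y) + blinfun_apply (T - T0) x"
      by (simp add: Sx u_def l_def blinfun.diff_left blinfun.add_left blinfun.scaleR_left algebra_simps)
    have "norm (u + l *\<^sub>R y) - \<delta> \<le> norm (blinfun_apply (T + \<mu> *\<^sub>R S) x)"
      using eq diffx norm_triangle_ineq2[of "u + l *\<^sub>R y" "- blinfun_apply (T - T0) x"] by simp
    moreover have "(1 - \<delta>) * (norm u + \<bar>l\<bar>) \<le> norm (u + l *\<^sub>R y)" using yoct[OF uF] .
    moreover have "(1 - \<delta>) * ((1 - 2 * \<delta>) + \<bar>\<mu>\<bar> * (1 - \<delta>)) \<le> (1 - \<delta>) * (norm u + \<bar>l\<bar>)"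
      using a lb d by (intro mult_left_mono) auto
    moreover have "(1 - 4 * \<delta>) * (1 + \<bar>\<mu>\<bar>) \<le> (1 - \<delta>) * ((1 - 2 * \<delta>) + \<bar>\<mu>\<bar> * (1 - \<delta>)) - \<delta>"
    proof -
      have "(1 - \<delta>) * ((1 - 2 * \<delta>) + \<bar>\<mu>\<bar> * (1 - \<delta>)) - \<delta> - (1 - 4 * \<delta>) * (1 + \<bar>\<mu>\<bar>)
          = 2 * \<delta>^2 + \<bar>\<mu>\<bar> * (2 * \<delta> + \<delta>^2)"
        by (simp add: algebra_simps power2_eq_square)
      also have "\<dots> \<ge> 0" using d by simp
      finally show ?thesis by simp
    qed
    ultimately show ?thesis using n1 by linarith
  qed
  show "\<exists>y\<in>H. norm y = 1 \<and> (\<forall>x\<in>E. \<forall>l. (1 - eps) * (norm x + \<bar>l\<bar>) \<le> norm (x + l *\<^sub>R y))"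
  proof (intro bexI conjI ballI allI)
    show "S \<in> H" by (rule SH)
    show "norm S = 1" by (rule nS)
    fix T l assume TE: "T \<in> E"
    show "(1 - eps) * (norm T + \<bar>l\<bar>) \<le> norm (T + l *\<^sub>R S)"
    proof (cases "T = 0")
      case True
      have "(1 - eps) * \<bar>l\<bar> \<le> 1 * \<bar>l\<bar>" using eps by (intro mult_right_mono) auto
      then show ?thesis using True nS by simp
    next
      case False
      define r where "r = norm T"
      have r: "r > 0" using False r_def by simp
      define T' where "T' = inverse r *\<^sub>R T"
      have T'E: "T' \<in> E" unfolding T'_def using subspace_scale[OF subE TE] .
      have nT': "norm T' = 1" unfolding T'_def using r by (simp add: r_def)
      have "(1 - 4 * \<delta>) * (1 + \<bar>l / r\<bar>) \<le> norm (T' + (l / r) *\<^sub>R S)" using K[OF T'E nT'] .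
      then have "r * ((1 - 4 * \<delta>) * (1 + \<bar>l / r\<bar>)) \<le> r * norm (T' + (l / r) *\<^sub>R S)"
        using r by (simp add: mult_left_mono)
      moreover have "r * ((1 - 4 * \<delta>) * (1 + \<bar>l / r\<bar>)) = (1 - 4 * \<delta>) * (r + \<bar>l\<bar>)"
      proof -
        have "\<bar>l / r\<bar> = \<bar>l\<bar> / r" using r by (simp add: abs_divide)
        then show ?thesis using r by (simp add: distrib_left mult.left_commute)
      qed
      moreover have "r * norm (T' + (l / r) *\<^sub>R S) = norm (T + l *\<^sub>R S)"
      proof -
        have "r *\<^sub>R (T' + (l / r) *\<^sub>R S) = T + l *\<^sub>R S"
          using r by (simp add: T'_def scaleR_add_right)
        then show ?thesis using r by (metis norm_scaleR abs_of_pos)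
      qed
      moreover have "(1 - eps) * (r + \<bar>l\<bar>) \<le> (1 - 4 * \<delta>) * (r + \<bar>l\<bar>)"
        using d r by (intro mult_right_mono) auto
      ultimately show ?thesis unfolding r_def[symmetric] by linarith
    qed
  qed
qed


end
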